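(* Let $\mathfrak{g}$ be one of the following $6$-dimensional nilpotent Lie algebras: $(0,0,12,13,14,15)$, $(0,0,12,13,14,23+15)$, $(0,0,0,12,14,24)$, $(0,0,0,12,13+42,14+23)$, $(0,0,0,12,14,13+42)$, $(0,0,0,12,13+14,24)$, $(0,0,0,12,13,14)$, $(0,0,0,0,12,15)$. Then $\mathfrak{g}$ admits a coherent splitting $\mathfrak{g}^*=V_1\oplus V_2$ with $V_1=\operatorname{span}\{e^1,e^2\}$ (so that $\Lambda^{2,0}$ is spanned by $e^{12}$) for which $h^{0,3}=0=h^{0,4}$.
   Context: Notation: $(0,0,12,13,14,15)$ denotes the Lie algebra having a basis $e^1,\dots,e^6$ of $\mathfrak{g}^*$ with $de^1=de^2=0$, $de^3=e^{12}$, $de^4=e^{13}$, $de^5=e^{14}$, $de^6=e^{15}$, where $e^{ij}=e^i\wedge e^j$, entries like $13+42$ mean $e^{13}+e^4\wedge e^2$, and $d$ is the Chevalley–Eilenberg differential. A coherent splitting is a decomposition $\mathfrak{g}^*=V_1\oplus V_2$ with $\dim V_1=2$ such that, with $\Lambda^{p,q}=\Lambda^pV_1\otimes\Lambda^qV_2$, $d(\Lambda^{p,q})\subset\Lambda^{p+1,q}+\Lambda^{p+2,q-1}$. With $F^k_p=\bigoplus_{p'\ge p}\Lambda^{p',k-p'}$, $Z^k$ the closed $k$-forms, $H^k$ the $k$-th cohomology of $(\Lambda^*\mathfrak{g}^*,d)$ and $H^k_p\subset H^k$ the image of $Z^k\cap F^k_p$, set $H^{p,q}=H^{p+q}_p/H^{p+q}_{p+1}$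 and $h^{p,q}=\dim H^{p,q}$ (these depend only on $V_1$). *)

theory Defs
  imports "HOL-Analysis.Analysis"
begin

datatype idx = X1 | X2 | X3 | X4 | X5 | X6

lemma UNIV_idx: "(UNIV :: idx set) = {X1, X2, X3, X4, X5, X6}"
  using idx.exhaust by auto

instance idx :: finite
  by standard (simp add: UNIV_idx)

fun num :: "idx \<Rightarrow> nat" where
  "num X1 = 1" | "num X2 = 2" | "num X3 = 3" | "num X4 = 4" | "num X5 = 5" | "num X6 = 6"

text \<open>A form is given by its coefficients on the basis e^I = e^{i1} wedge ... wedge e^{ik},
  I = {i1 < ... < ik} (order given by num).\<close>
type_synonym form = "real ^ (idx set)"

definition sgn_merge :: "idx set \<Rightarrow> idx set \<Rightarrow> real" where
  "sgn_merge I J = (-1) ^ card {(i, j). i \<in> I \<and> j \<in> J \<and> num j < num i}"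

definition wedge :: "form \<Rightarrow> form \<Rightarrow> form" where
  "wedge a b = (\<chi> K. \<Sum>I\<in>Pow K. sgn_merge I (K - I) * a $ I * b $ (K - I))"

definition unit_form :: form where
  "unit_form = axis {} 1"

definition e :: "idx \<Rightarrow> form" where
  "e i = axis {i} 1"

definition ee :: "idx \<Rightarrow> idx \<Rightarrow> form" where
  "ee i j = wedge (e i) (e j)"

definition wedges :: "form list \<Rightarrow> form" where
  "wedges xs = foldr wedge xs unit_form"

definition Lam :: "nat \<Rightarrow> form set" where
  "Lam k = span {axis I 1 | I. card I = k}"

section \<open>Chevalley--Eilenberg differential determined by the values D i = d e^i\<close>

definition d_basis :: "(idx \<Rightarrow> form) \<Rightarrow> idx set \<Rightarrow> form" where
  "d_basis D I = (\<Sum>i\<in>I. ((-1) ^ card {j \<in> I. num j < num i}) *\<^sub>R wedge (D i) (axis (I - {i}) 1))"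

definition dd :: "(idx \<Rightarrow> form) \<Rightarrow> form \<Rightarrow> form" where
  "dd D a = (\<Sum>I\<in>UNIV. (a $ I) *\<^sub>R d_basis D I)"

fun alg1 :: "idx \<Rightarrow> form" where
  "alg1 X1 = 0" | "alg1 X2 = 0" | "alg1 X3 = ee X1 X2" | "alg1 X4 = ee X1 X3"
| "alg1 X5 = ee X1 X4" | "alg1 X6 = ee X1 X5"

fun alg2 :: "idx \<Rightarrow> form" where
  "alg2 X1 = 0" | "alg2 X2 = 0" | "alg2 X3 = ee X1 X2" | "alg2 X4 = ee X1 X3"
| "alg2 X5 = ee X1 X4" | "alg2 X6 = ee X2 X3 + ee X1 X5"

fun alg3 :: "idx \<Rightarrow> form" where
  "alg3 X1 = 0" | "alg3 X2 = 0" | "alg3 X3 = 0" | "alg3 X4 = ee X1 X2"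
| "alg3 X5 = ee X1 X4" | "alg3 X6 = ee X2 X4"

fun alg4 :: "idx \<Rightarrow> form" where
  "alg4 X1 = 0" | "alg4 X2 = 0" | "alg4 X3 = 0" | "alg4 X4 = ee X1 X2"
| "alg4 X5 = ee X1 X3 + ee X4 X2" | "alg4 X6 = ee X1 X4 + ee X2 X3"

fun alg5 :: "idx \<Rightarrow> form" where
  "alg5 X1 = 0" | "alg5 X2 = 0" | "alg5 X3 = 0" | "alg5 X4 = ee X1 X2"
| "alg5 X5 = ee X1 X4" | "alg5 X6 = ee X1 X3 + ee X4 X2"

fun alg6 :: "idx \<Rightarrow> form" where
  "alg6 X1 = 0" | "alg6 X2 = 0" | "alg6 X3 = 0" | "alg6 X4 = ee X1 X2"
| "alg6 X5 = ee X1 X3 + ee X1 X4" | "alg6 X6 = ee X2 X4"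

fun alg7 :: "idx \<Rightarrow> form" where
  "alg7 X1 = 0" | "alg7 X2 = 0" | "alg7 X3 = 0" | "alg7 X4 = ee X1 X2"
| "alg7 X5 = ee X1 X3" | "alg7 X6 = ee X1 X4"

fun alg8 :: "idx \<Rightarrow> form" where
  "alg8 X1 = 0" | "alg8 X2 = 0" | "alg8 X3 = 0" | "alg8 X4 = 0"
| "alg8 X5 = ee X1 X2" | "alg8 X6 = ee X1 X5"

definition bideg :: "form set \<Rightarrow> form set \<Rightarrow> nat \<Rightarrow> nat \<Rightarrow> form set" where
  "bideg V1 V2 p q = span {wedges (xs @ ys) | xs ys.
      length xs = p \<and> set xs \<subseteq> V1 \<and> length ys = q \<and> set ys \<subseteq> V2}"

definition set_sum :: "form set \<Rightarrow> form set \<Rightarrow> form set" where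
  "set_sum A B = {x + y | x y. x \<in> A \<and> y \<in> B}"

definition splitting :: "form set \<Rightarrow> form set \<Rightarrow> bool" where
  "splitting V1 V2 \<longleftrightarrow> subspace V1 \<and> subspace V2 \<and> V1 \<subseteq> Lam 1 \<and> V2 \<subseteq> Lam 1
     \<and> V1 \<inter> V2 = {0} \<and> set_sum V1 V2 = Lam 1 \<and> dim V1 = 2"

definition coherent :: "(idx \<Rightarrow> form) \<Rightarrow> form set \<Rightarrow> form set \<Rightarrow> bool" where
  "coherent D V1 V2 \<longleftrightarrow> splitting V1 V2 \<and>
     (\<forall>p q. dd D ` bideg V1 V2 p q \<subseteq>
        set_sum (bideg V1 V2 (p + 1) q) (if q = 0 then {0} else bideg V1 V2 (p + 2) (q - 1)))"

definition filt :: "form set \<Rightarrow> form set \<Rightarrow> nat \<Rightarrow> nat \<Rightarrow> form set" where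
  "filt V1 V2 k p = span (\<Union>p'\<in>{p..k}. bideg V1 V2 p' (k - p'))"

definition closed_forms :: "(idx \<Rightarrow> form) \<Rightarrow> nat \<Rightarrow> form set" where
  "closed_forms D k = {a \<in> Lam k. dd D a = 0}"

definition exact_forms :: "(idx \<Rightarrow> form) \<Rightarrow> nat \<Rightarrow> form set" where
  "exact_forms D k = (if k = 0 then {0} else dd D ` Lam (k - 1))"

text \<open>The preimage in Z^k of H^k_p (the image of Z^k cap F^k_p in H^k = Z^k / B^k),
  i.e. (Z^k cap F^k_p) + B^k; hence dim H^k_p = dim of this space minus dim B^k.\<close>
definition Hfilt_lift :: "(idx \<Rightarrow> form) \<Rightarrow> form set \<Rightarrow> form set \<Rightarrow> nat \<Rightarrow> nat \<Rightarrow> form set" where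
  "Hfilt_lift D V1 V2 k p = set_sum (closed_forms D k \<inter> filt V1 V2 k p) (exact_forms D k)"

text \<open>h^{p,q} = dim H^{p+q}_p / H^{p+q}_{p+1} = dim H^{p+q}_p - dim H^{p+q}_{p+1}.\<close>
definition hpq :: "(idx \<Rightarrow> form) \<Rightarrow> form set \<Rightarrow> form set \<Rightarrow> nat \<Rightarrow> nat \<Rightarrow> nat" where
  "hpq D V1 V2 p q = dim (Hfilt_lift D V1 V2 (p + q) p) - dim (Hfilt_lift D V1 V2 (p + q) (p + 1))"

end

theory Submission
  imports Defs
begin


lemma axis_nth': "axis I c $ J = (if J = I then c else 0)"
  by (simp add: axis_def)

lemma num_inj: "num i = num j \<longleftrightarrow> i = j"
  by (cases i; cases j; simp)

lemma Collect_insert_filter: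
  "{j \<in> insert a A. P j} = (if P a then insert a {j \<in> A. P j} else {j \<in> A. P j})"
  by auto

lemma wedge_nonzero:
  assumes "wedge x y $ K \<noteq> 0"
  shows "\<exists>L\<subseteq>K. x $ L \<noteq> 0 \<and> y $ (K - L) \<noteq> 0"
proof -
  have "(\<Sum>I\<in>Pow K. sgn_merge I (K - I) * x $ I * y $ (K - I)) \<noteq> 0"
    using assms by (simp add: wedge_def)
  then obtain L where "L \<in> Pow K" "sgn_merge L (K - L) * x $ L * y $ (K - L) \<noteq> 0"
    by (meson sum.neutral)
  then show ?thesis by auto
qed

lemma wedge_axis_right:
  "wedge x (axis J c) $ K = (if J \<subseteq> K then sgn_merge (K - J) J * x $ (K - J) * c else 0)"
proof (cases "J \<subseteq> K")
  case True
  have "wedge x (axis J c) $ K = (\<Sum>L\<in>Pow K. if L = K - J then sgn_merge L (K - L) * x $ L * c else 0)"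
    unfolding wedge_def vec_lambda_beta
  proof (rule sum.cong)
    fix L assume "L \<in> Pow K"
    then have "(K - L = J) = (L = K - J)" using True by auto
    then show "sgn_merge L (K - L) * x $ L * axis J c $ (K - L) =
         (if L = K - J then sgn_merge L (K - L) * x $ L * c else 0)"
      by (auto simp: axis_nth')
  qed simp
  also have "\<dots> = sgn_merge (K - J) J * x $ (K - J) * c"
    using True by (simp add: sum.delta' Diff_Diff_Int Int_absorb1)
  finally show ?thesis using True by simp
next
  case False
  have "wedge x (axis J c) $ K = (\<Sum>L\<in>Pow K. 0)"
    unfolding wedge_def vec_lambda_beta
    by (rule sum.cong) (use False in \<open>auto simp: axis_nth'\<close>)
  then show ?thesis using False by simp
qed

lemma wedge_axis_axis:
  "wedge (axis I a) (axis J b) = (if I \<inter> J = {} then axis (I \<union> J) (sgn_merge I J * a * b) else 0)"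
proof (subst vec_eq_iff, intro allI)
  fix K
  show "wedge (axis I a) (axis J b) $ K = (if I \<inter> J = {} then axis (I \<union> J) (sgn_merge I J * a * b) else 0) $ K"
  proof (cases "J \<subseteq> K \<and> K - J = I")
    case True
    then have "K = I \<union> J" "I \<inter> J = {}" by auto
    then show ?thesis using True by (simp add: wedge_axis_right axis_nth')
  next
    case False
    then have "\<not> (I \<inter> J = {} \<and> K = I \<union> J)" by auto
    then show ?thesis using False by (auto simp: wedge_axis_right axis_nth')
  qed
qed

definition cnt :: "idx \<Rightarrow> idx set \<Rightarrow> nat" where
  "cnt i J = card {j \<in> J. num j < num i}"

lemma cnt_empty [simp]: "cnt i {} = 0"
  by (simp add: cnt_def)

lemma cnt_insert [simp]:
  "cnt i (insert j J) = (if j \<in> J then cnt i J else (if num j < num i then 1 else 0) + cnt i J)"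
proof -
  have "{k \<in> insert j J. num k < num i} = (if num j < num i then insert j {k \<in> J. num k < num i} else {k \<in> J. num k < num i})"
    by auto
  then show ?thesis unfolding cnt_def
    by (auto simp: card_insert_if)
qed

lemma sgn_merge_empty [simp]: "sgn_merge {} J = 1"
  by (simp add: sgn_merge_def)

lemma sgn_merge_insert:
  assumes "i \<notin> I"
  shows "sgn_merge (insert i I) J = (-1) ^ cnt i J * sgn_merge I J"
proof -
  let ?S = "\<lambda>I. {(i, j). i \<in> I \<and> j \<in> J \<and> num j < num i}"
  have eq: "?S (insert i I) = Pair i ` {j \<in> J. num j < num i} \<union> ?S I" by auto
  have disj: "Pair i ` {j \<in> J. num j < num i} \<inter> ?S I = {}" using assms by auto
  have fin: "finite (?S I)"
    by (rule finite_subset[of _ "UNIV"]) auto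
  have "card (?S (insert i I)) = card {j \<in> J. num j < num i} + card (?S I)"
    unfolding eq by (subst card_Un_disjoint) (use disj fin in \<open>auto simp: card_image inj_on_def\<close>)
  then show ?thesis by (simp add: sgn_merge_def power_add cnt_def)
qed

lemma ee_eq: "ee i j = (if i = j then 0 else axis {i, j} (if num j < num i then -1 else 1))"
proof -
  have "sgn_merge {i} {j} = (if num j < num i then -1 else 1)"
    by (simp add: sgn_merge_insert)
  then show ?thesis
    by (auto simp: ee_def e_def wedge_axis_axis insert_commute)
qed

lemma dd_nth: "dd D a $ K = (\<Sum>I\<in>UNIV. a $ I * d_basis D I $ K)"
  by (simp add: dd_def)

lemma d_basis_nth: "d_basis D I $ K = (\<Sum>i\<in>I. (-1) ^ cnt i I * wedge (D i) (axis (I - {i}) 1) $ K)"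
  by (simp add: d_basis_def cnt_def)

lemma subspace_Lam_coord: "subspace {a :: form. \<forall>I. card I \<noteq> k \<longrightarrow> a $ I = 0}"
  by (auto simp: subspace_def)

lemma Lam_coord: "a \<in> Lam k \<Longrightarrow> card I \<noteq> k \<Longrightarrow> a $ I = 0"
proof -
  assume "a \<in> Lam k" "card I \<noteq> k"
  have "Lam k \<subseteq> {a :: form. \<forall>I. card I \<noteq> k \<longrightarrow> a $ I = 0}"
    unfolding Lam_def by (rule span_minimal) (auto simp: axis_nth' subspace_Lam_coord)
  then show ?thesis using \<open>a \<in> Lam k\<close> \<open>card I \<noteq> k\<close> by auto
qed

lemma UNIV_idxset: "(UNIV :: idx set set) = Pow {X1, X2, X3, X4, X5, X6}"
  by (simp add: UNIV_idx[symmetric])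

lemma inj_on_insert_notin: "inj_on (insert x) {J. x \<notin> J}"
proof (rule inj_onI)
  fix I J assume "I \<in> {J. x \<notin> J}" "J \<in> {J. x \<notin> J}" "insert x I = insert x J"
  then have "insert x I - {x} = insert x J - {x}" "x \<notin> I" "x \<notin> J" by auto
  then show "I = J" by simp
qed

lemma sum_Pow_insert:
  assumes "x \<notin> A" "finite A"
  shows "sum f (Pow (insert x A)) = sum f (Pow A) + sum (\<lambda>I. f (insert x I)) (Pow A)"
proof -
  have "Pow (insert x A) = Pow A \<union> insert x ` Pow A" by (rule Pow_insert)
  moreover have "Pow A \<inter> insert x ` Pow A = {}" using assms by auto
  moreover have "inj_on (insert x) (Pow A)" using assms by (intro inj_on_subset[OF inj_on_insert_notin]) auto
  ultimately show ?thesis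
    using assms by (simp add: sum.union_disjoint sum.reindex)
qed

lemma dd_nth_Lam:
  assumes "a \<in> Lam k"
  shows "dd D a $ K = (\<Sum>I\<in>Pow {X1, X2, X3, X4, X5, X6}. (if card I = k then a $ I * d_basis D I $ K else 0))"
  unfolding dd_nth UNIV_idxset
  by (rule sum.cong) (use Lam_coord[OF assms] in auto)

lemma dd_nth2:
  "dd D a $ K = (\<Sum>i\<in>UNIV. \<Sum>J\<in>Pow K. if i \<in> J then 0 else
       a $ insert i J * ((-1) ^ cnt i J * (sgn_merge (K - J) J * D i $ (K - J))))"
proof -
  define w where "w i I = a $ I * ((-1) ^ cnt i I * wedge (D i) (axis (I - {i}) 1) $ K)" for i I
  have "dd D a $ K = (\<Sum>I\<in>UNIV. \<Sum>i\<in>UNIV. if i \<in> I then w i I else 0)"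
    unfolding dd_nth d_basis_nth w_def
    by (simp add: sum_distrib_left sum.If_cases)
  also have "\<dots> = (\<Sum>i\<in>UNIV. \<Sum>I\<in>UNIV. if i \<in> I then w i I else 0)"
    by (rule sum.swap)
  also have "\<dots> = (\<Sum>i\<in>UNIV. \<Sum>J\<in>Pow K. if i \<in> J then 0 else
       a $ insert i J * ((-1) ^ cnt i J * (sgn_merge (K - J) J * D i $ (K - J))))"
  proof (rule sum.cong[OF refl])
    fix i
    have "(\<Sum>I\<in>UNIV. if i \<in> I then w i I else 0) = (\<Sum>I\<in>{I. i \<in> I}. w i I)"
      by (simp add: sum.If_cases Int_def)
    also have "{I. i \<in> I} = insert i ` {J. i \<notin> J}"
      proof
      show "{I. i \<in> I} \<subseteq> insert i ` {J. i \<notin> J}"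
      proof
        fix I assume "I \<in> {I. i \<in> I}"
        then have "I = insert i (I - {i})" by auto
        then show "I \<in> insert i ` {J. i \<notin> J}" by (rule image_eqI) simp
      qed
    qed auto
    also have "(\<Sum>I\<in>insert i ` {J. i \<notin> J}. w i I) = (\<Sum>J\<in>{J. i \<notin> J}. w i (insert i J))"
      by (rule sum.reindex_cong[OF inj_on_insert_notin refl refl])
    also have "\<dots> = (\<Sum>J\<in>UNIV. if i \<in> J then 0 else w i (insert i J))"
      by (simp add: sum.If_cases Int_def Collect_neg_eq)
    also have "\<dots> = (\<Sum>J\<in>Pow K. if i \<in> J then 0 else w i (insert i J))"
    proof (rule sum.mono_neutral_right)
      show "\<forall>J\<in>UNIV - Pow K. (if i \<in> J then 0 else w i (insert i J)) = 0"
        by (auto simp: w_def wedge_axis_right)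
    qed auto
    also have "\<dots> = (\<Sum>J\<in>Pow K. if i \<in> J then 0 else
       a $ insert i J * ((-1) ^ cnt i J * (sgn_merge (K - J) J * D i $ (K - J))))"
    proof (rule sum.cong[OF refl])
      fix J assume "J \<in> Pow K"
      show "(if i \<in> J then 0 else w i (insert i J)) = (if i \<in> J then 0 else
       a $ insert i J * ((-1) ^ cnt i J * (sgn_merge (K - J) J * D i $ (K - J))))"
        using \<open>J \<in> Pow K\<close> by (auto simp: w_def wedge_axis_right)
    qed
    finally show "(\<Sum>I\<in>UNIV. if i \<in> I then w i I else 0) = \<dots>" .
  qed
  finally show ?thesis .
qed

lemma set_eq_idx: "(A :: idx set) = B \<longleftrightarrow> ((X1 \<in> A) = (X1 \<in> B)) \<and> ((X2 \<in> A) = (X2 \<in> B)) \<and>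
  ((X3 \<in> A) = (X3 \<in> B)) \<and> ((X4 \<in> A) = (X4 \<in> B)) \<and> ((X5 \<in> A) = (X5 \<in> B)) \<and> ((X6 \<in> A) = (X6 \<in> B))"
proof
  assume R: "((X1 \<in> A) = (X1 \<in> B)) \<and> ((X2 \<in> A) = (X2 \<in> B)) \<and>
  ((X3 \<in> A) = (X3 \<in> B)) \<and> ((X4 \<in> A) = (X4 \<in> B)) \<and> ((X5 \<in> A) = (X5 \<in> B)) \<and> ((X6 \<in> A) = (X6 \<in> B))"
  show "A = B"
  proof (rule set_eqI)
    fix x show "(x \<in> A) = (x \<in> B)" using R by (cases x) auto
  qed
qed simp

section \<open>Wedges of basis vectors\<close>

lemma e_axis: "e i = axis {i} 1" by (simp add: e_def)

lemma wedges_sorted: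
  "sorted_wrt (\<lambda>x y. num x < num y) l \<Longrightarrow> wedges (map e l) = axis (set l) 1"
proof (induction l)
  case Nil
  then show ?case by (simp add: wedges_def unit_form_def)
next
  case (Cons x l)
  then have IH: "wedges (map e l) = axis (set l) 1" and lt: "\<forall>y\<in>set l. num x < num y" by auto
  then have nx: "x \<notin> set l" by auto
  have c0: "cnt x (set l) = 0" unfolding cnt_def using lt by (auto simp: card_eq_0_iff)
  have "wedges (map e (x # l)) = wedge (e x) (wedges (map e l))" by (simp add: wedges_def)
  also have "\<dots> = axis (set (x # l)) 1"
    unfolding IH e_axis wedge_axis_axis using nx c0 by (simp add: sgn_merge_insert)
  finally show ?case .
qed

abbreviation "AA \<equiv> {X1, X2}"
abbreviation "VV1 \<equiv> span {e X1, e X2}"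
abbreviation "VV2 \<equiv> span {e X3, e X4, e X5, e X6}"

lemma axis_in_bideg: "axis J 1 \<in> bideg VV1 VV2 (card (J \<inter> AA)) (card (J - AA))"
proof -
  define l1 where "l1 = filter (\<lambda>x. x \<in> J) [X1, X2]"
  define l2 where "l2 = filter (\<lambda>x. x \<in> J) [X3, X4, X5, X6]"
  have srt: "sorted_wrt (\<lambda>x y. num x < num y) (l1 @ l2)"
  proof -
    have "l1 @ l2 = filter (\<lambda>x. x \<in> J) [X1, X2, X3, X4, X5, X6]" by (simp add: l1_def l2_def)
    moreover have "sorted_wrt (\<lambda>x y. num x < num y) [X1, X2, X3, X4, X5, X6]" by simp
    ultimately show ?thesis by (simp add: sorted_wrt_filter)
  qed
  have setl: "set (l1 @ l2) = J"
  proof (rule set_eqI)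
    fix x show "(x \<in> set (l1 @ l2)) = (x \<in> J)" by (cases x) (auto simp: l1_def l2_def)
  qed
  have s1: "set l1 = J \<inter> AA" by (auto simp: l1_def)
  have s2: "set l2 = J - AA"
  proof (rule set_eqI)
    fix x show "(x \<in> set l2) = (x \<in> J - AA)" by (cases x) (auto simp: l2_def)
  qed
  have d1: "distinct l1" "distinct l2" by (auto simp: l1_def l2_def)
  have "wedges (map e l1 @ map e l2) = axis J 1"
    using wedges_sorted[OF srt] setl by simp
  moreover have "length (map e l1) = card (J \<inter> AA)" using d1 s1 by (simp add: distinct_card[symmetric])
  moreover have "length (map e l2) = card (J - AA)" using d1 s2 by (simp add: distinct_card[symmetric])
  moreover have "set (map e l1) \<subseteq> VV1" by (auto simp: l1_def intro: span_base)
  moreover have "set (map e l2) \<subseteq> VV2" by (auto simp: l2_def intro: span_base)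
  ultimately have "axis J 1 \<in> {wedges (xs @ ys) |xs ys.
           length xs = card (J \<inter> AA) \<and> set xs \<subseteq> VV1 \<and> length ys = card (J - AA) \<and> set ys \<subseteq> VV2}"
    by (intro CollectI exI[where x="map e l1"] exI[where x="map e l2"]) simp
  then show ?thesis unfolding bideg_def by (rule span_base)
qed

section \<open>Supports\<close>

definition supp :: "(idx set \<Rightarrow> bool) \<Rightarrow> form set" where
  "supp P = {x. \<forall>I. x $ I \<noteq> 0 \<longrightarrow> P I}"

lemma subspace_supp: "subspace (supp P)"
  by (auto simp: subspace_def supp_def) (metis add.left_neutral)

lemma axis_supp: "P S \<Longrightarrow> axis S c \<in> supp P"
  by (auto simp: supp_def axis_nth')

lemma zero_supp: "0 \<in> supp P"
  by (simp add: supp_def)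

lemma add_supp: "x \<in> supp P \<Longrightarrow> y \<in> supp P \<Longrightarrow> x + y \<in> supp P"
  using subspace_supp subspace_add by blast

lemma V1_supp: "VV1 \<subseteq> supp (\<lambda>I. \<exists>a\<in>AA. I = {a})"
  by (rule span_minimal) (auto simp: subspace_supp e_axis intro: axis_supp)

lemma V2_supp: "VV2 \<subseteq> supp (\<lambda>I. \<exists>b. b \<notin> AA \<and> I = {b})"
  by (rule span_minimal) (auto simp: subspace_supp e_axis intro: axis_supp)

definition cls :: "nat \<Rightarrow> nat \<Rightarrow> idx set \<Rightarrow> bool" where
  "cls p q I \<longleftrightarrow> card (I \<inter> AA) = p \<and> card (I - AA) = q"

lemma wedge_supp_V1:
  assumes x: "x \<in> supp (\<lambda>I. \<exists>a\<in>AA. I = {a})" and r: "r \<in> supp (cls p q)"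
  shows "wedge x r \<in> supp (cls (Suc p) q)"
  unfolding supp_def
proof (intro CollectI allI impI)
  fix K assume "wedge x r $ K \<noteq> 0"
  then obtain L where L: "L \<subseteq> K" "x $ L \<noteq> 0" "r $ (K - L) \<noteq> 0" using wedge_nonzero by blast
  then obtain a where a: "a \<in> AA" "L = {a}" using x by (auto simp: supp_def)
  have c: "cls p q (K - {a})" using L r a by (auto simp: supp_def)
  have "K \<inter> AA = insert a ((K - {a}) \<inter> AA)" using a L by auto
  then have "card (K \<inter> AA) = Suc p" using c by (simp add: cls_def)
  moreover have "K - AA = (K - {a}) - AA" using a by auto
  ultimately show "cls (Suc p) q K" using c by (simp add: cls_def)
qed

lemma wedge_supp_V2:
  assumes x: "x \<in> supp (\<lambda>I. \<exists>b. b \<notin> AA \<and> I = {b})" and r: "r \<in> supp (cls p q)"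
  shows "wedge x r \<in> supp (cls p (Suc q))"
  unfolding supp_def
proof (intro CollectI allI impI)
  fix K assume "wedge x r $ K \<noteq> 0"
  then obtain L where L: "L \<subseteq> K" "x $ L \<noteq> 0" "r $ (K - L) \<noteq> 0" using wedge_nonzero by blast
  then obtain b where b: "b \<notin> AA" "L = {b}" using x by (auto simp: supp_def)
  have c: "cls p q (K - {b})" using L r b by (auto simp: supp_def)
  have "K - AA = insert b ((K - {b}) - AA)" using b L by auto
  then have "card (K - AA) = Suc q" using c by (simp add: cls_def)
  moreover have "K \<inter> AA = (K - {b}) \<inter> AA" using b by auto
  ultimately show "cls p (Suc q) K" using c by (simp add: cls_def)
qed

lemma unit_supp: "unit_form \<in> supp (cls 0 0)"
  by (auto simp: unit_form_def supp_def axis_nth' cls_def)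

lemma wedges_supp:
  assumes "set ys \<subseteq> VV2" "set xs \<subseteq> VV1"
  shows "wedges (xs @ ys) \<in> supp (cls (length xs) (length ys))"
proof -
  have Y: "foldr wedge ys unit_form \<in> supp (cls 0 (length ys))"
    using assms(1)
  proof (induction ys)
    case Nil then show ?case using unit_supp by simp
  next
    case (Cons y ys)
    then show ?case using wedge_supp_V2 V2_supp by auto
  qed
  have "foldr wedge xs (foldr wedge ys unit_form) \<in> supp (cls (length xs) (length ys))"
    using assms(2)
  proof (induction xs)
    case Nil then show ?case using Y by simp
  next
    case (Cons x xs)
    then show ?case using wedge_supp_V1 V1_supp by auto
  qed
  then show ?thesis by (simp add: wedges_def)
qed

lemma bideg_supp: "bideg VV1 VV2 p q \<subseteq> supp (cls p q)"
  unfolding bideg_def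
  by (rule span_minimal) (auto simp: subspace_supp dest: wedges_supp)


section \<open>Coherence\<close>

lemma subspace_set_sum: "subspace (A :: form set) \<Longrightarrow> subspace B \<Longrightarrow> subspace (set_sum A B)"
  unfolding subspace_def set_sum_def
proof (intro conjI ballI allI)
  assume A: "0 \<in> A \<and> (\<forall>x\<in>A. \<forall>y\<in>A. x + y \<in> A) \<and> (\<forall>c. \<forall>x\<in>A. c *\<^sub>R x \<in> A)"
     and B: "0 \<in> B \<and> (\<forall>x\<in>B. \<forall>y\<in>B. x + y \<in> B) \<and> (\<forall>c. \<forall>x\<in>B. c *\<^sub>R x \<in> B)"
  show "(0::form) \<in> {x + y |x y. x \<in> A \<and> y \<in> B}" using A B by force
  fix u v assume "u \<in> {x + y |x y. x \<in> A \<and> y \<in> B}" "v \<in> {x + y |x y. x \<in> A \<and> y \<in> B}"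
  then obtain x1 y1 x2 y2 where "u = x1 + y1" "v = x2 + y2" "x1 \<in> A" "y1 \<in> B" "x2 \<in> A" "y2 \<in> B" by blast
  then have "u + v = (x1 + x2) + (y1 + y2)" "x1 + x2 \<in> A" "y1 + y2 \<in> B" using A B by (auto simp: algebra_simps)
  then show "u + v \<in> {x + y |x y. x \<in> A \<and> y \<in> B}" by blast
next
  fix c u
  assume A: "0 \<in> A \<and> (\<forall>x\<in>A. \<forall>y\<in>A. x + y \<in> A) \<and> (\<forall>c. \<forall>x\<in>A. c *\<^sub>R x \<in> A)"
     and B: "0 \<in> B \<and> (\<forall>x\<in>B. \<forall>y\<in>B. x + y \<in> B) \<and> (\<forall>c. \<forall>x\<in>B. c *\<^sub>R x \<in> B)"
     and "u \<in> {x + y |x y. x \<in> A \<and> y \<in> B}"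
  then obtain x1 y1 where "u = x1 + y1" "x1 \<in> A" "y1 \<in> B" by blast
  then have "c *\<^sub>R u = c *\<^sub>R x1 + c *\<^sub>R y1" "c *\<^sub>R x1 \<in> A" "c *\<^sub>R y1 \<in> B" using A B by (auto simp: algebra_simps)
  then show "c *\<^sub>R u \<in> {x + y |x y. x \<in> A \<and> y \<in> B}" by blast
qed

abbreviation tgt :: "nat \<Rightarrow> nat \<Rightarrow> form set" where
  "tgt p q \<equiv> set_sum (bideg VV1 VV2 (p + 1) q) (if q = 0 then {0} else bideg VV1 VV2 (p + 2) (q - 1))"

lemma subspace_tgt: "subspace (tgt p q)"
  by (rule subspace_set_sum) (auto simp: bideg_def subspace_span)

lemma expansion: "x = (\<Sum>J\<in>UNIV. x $ J *\<^sub>R axis J (1::real))"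
  using basis_expansion[of x] by (simp add: scalar_mult_eq_scaleR)

lemma axis_in_bideg': "card (J \<inter> AA) = p \<Longrightarrow> card (J - AA) = q \<Longrightarrow> axis J 1 \<in> bideg VV1 VV2 p q"
  using axis_in_bideg by blast

lemma supp_to_tgt:
  assumes "x \<in> supp (\<lambda>J. cls (p + 1) q J \<or> (q \<noteq> 0 \<and> cls (p + 2) (q - 1) J))"
  shows "x \<in> tgt p q"
proof -
  let ?u = "\<Sum>J\<in>UNIV. if cls (p + 1) q J then x $ J *\<^sub>R axis J 1 else 0"
  let ?v = "\<Sum>J\<in>UNIV. if cls (p + 1) q J then 0 else x $ J *\<^sub>R axis J 1"
  have "x = ?u + ?v"
    by (subst expansion) (simp add: sum.distrib[symmetric] if_distrib cong: if_cong)
  moreover have "?u \<in> bideg VV1 VV2 (p + 1) q"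
    by (rule subspace_sum) (auto simp: bideg_def subspace_span cls_def
        intro!: subspace_scale[OF subspace_span] axis_in_bideg'[unfolded bideg_def] subspace_0[OF subspace_span])
  moreover have "?v \<in> (if q = 0 then {0} else bideg VV1 VV2 (p + 2) (q - 1))"
  proof (cases "q = 0")
    case True
    have "?v = 0"
      by (rule sum.neutral) (use assms True in \<open>auto simp: supp_def\<close>)
    then show ?thesis using True by simp
  next
    case False
    have "?v \<in> bideg VV1 VV2 (p + 2) (q - 1)"
    proof (rule subspace_sum)
      show "subspace (bideg VV1 VV2 (p + 2) (q - 1))" by (simp add: bideg_def subspace_span)
      fix J
      show "(if cls (p + 1) q J then 0 else x $ J *\<^sub>R axis J 1) \<in> bideg VV1 VV2 (p + 2) (q - 1)"
      proof (cases "cls (p + 1) q J \<or> x $ J = 0")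
        case True
        then show ?thesis by (auto simp: bideg_def intro: subspace_0[OF subspace_span])
      next
        case F: False
        then have "cls (p + 2) (q - 1) J" using assms by (auto simp: supp_def)
        then have "axis J 1 \<in> bideg VV1 VV2 (p + 2) (q - 1)" by (intro axis_in_bideg') (auto simp: cls_def)
        then show ?thesis using F by (auto simp: bideg_def intro: subspace_scale[OF subspace_span])
      qed
    qed
    then show ?thesis using False by simp
  qed
  ultimately show ?thesis unfolding set_sum_def by blast
qed

lemma wedge_zero_left: "wedge 0 y = 0"
  by (simp add: wedge_def vec_eq_iff)

lemma d_basis_supp:
  assumes DA: "\<forall>i\<in>AA. D i = 0"
    and DS: "\<forall>i. D i \<in> supp (\<lambda>L. card L = 2 \<and> L \<inter> AA \<noteq> {})"
    and c: "cls p q I"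
  shows "d_basis D I \<in> supp (\<lambda>J. cls (p + 1) q J \<or> (q \<noteq> 0 \<and> cls (p + 2) (q - 1) J))"
  unfolding d_basis_def
proof (rule subspace_sum[OF subspace_supp], rule subspace_scale[OF subspace_supp])
  fix i assume iI: "i \<in> I"
  show "wedge (D i) (axis (I - {i}) 1) \<in> supp (\<lambda>J. cls (p + 1) q J \<or> (q \<noteq> 0 \<and> cls (p + 2) (q - 1) J))"
  proof (cases "i \<in> AA")
    case True
    then have "D i = 0" using DA by blast
    then show ?thesis by (simp add: wedge_zero_left zero_supp)
  next
    case iA: False
    show ?thesis unfolding supp_def
    proof (intro CollectI allI impI)
      fix K assume "wedge (D i) (axis (I - {i}) 1) $ K \<noteq> 0"
      from wedge_nonzero[OF this] obtain L where L0: "L \<subseteq> K \<and> D i $ L \<noteq> 0 \<and> axis (I - {i}) (1::real) $ (K - L) \<noteq> 0"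
        by (elim exE) (rule that)
      then have L: "L \<subseteq> K" "D i $ L \<noteq> 0" "axis (I - {i}) (1::real) $ (K - L) \<noteq> 0" by simp_all
      have KL: "K - L = I - {i}" using L(3) by (auto simp: axis_nth' split: if_splits)
      have L2: "card L = 2" "L \<inter> AA \<noteq> {}" using DS L(2) by (auto simp: supp_def)
      have finL: "finite L" by simp
      have KA: "K \<inter> AA = (L \<inter> AA) \<union> (I \<inter> AA)" "(L \<inter> AA) \<inter> (I \<inter> AA) = {}"
        using L(1) KL iA by blast+
      have KB: "K - AA = (L - AA) \<union> ((I - AA) - {i})" "(L - AA) \<inter> ((I - AA) - {i}) = {}"
        using L(1) KL by blast+
      have cI: "card (I \<inter> AA) = p" "card (I - AA) = q" using c by (auto simp: cls_def)
      have iIA: "i \<in> I - AA" using iI iA by simp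
      then have q0: "q \<noteq> 0" using cI(2) card_gt_0_iff[of "I - AA"] by auto
      have cIB: "card ((I - AA) - {i}) = q - 1" using iIA cI(2) by simp
      have cKA: "card (K \<inter> AA) = card (L \<inter> AA) + p" using KA cI by (simp add: card_Un_disjoint)
      have cKB: "card (K - AA) = card (L - AA) + (q - 1)" using KB cIB by (simp add: card_Un_disjoint)
      have sp: "card (L \<inter> AA) + card (L - AA) = 2"
        using L2(1) card_Un_disjoint[of "L \<inter> AA" "L - AA"] by (metis Int_Diff_Un Int_Diff_disjoint finL finite_Diff finite_Int)
      have pos: "card (L \<inter> AA) \<noteq> 0" using L2(2) by simp
      show "cls (p + 1) q K \<or> (q \<noteq> 0 \<and> cls (p + 2) (q - 1) K)"
      proof (cases "card (L \<inter> AA) = 1")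
        case True
        then have h: "card (L - AA) = 1" using sp by linarith
        have "card (K \<inter> AA) = p + 1" using cKA True by linarith
        moreover have "card (K - AA) = q" using cKB h q0 by linarith
        ultimately show ?thesis by (simp add: cls_def)
      next
        case False
        have le1: "card (L \<inter> AA) \<le> card AA" by (rule card_mono) auto
        have le2: "card AA = 2" by simp
        have h: "card (L \<inter> AA) = 2" "card (L - AA) = 0" using False sp pos le1 le2 by linarith+
        have "card (K \<inter> AA) = p + 2" using cKA h(1) by linarith
        moreover have "card (K - AA) = q - 1" using cKB h(2) by linarith
        ultimately show ?thesis using q0 by (simp add: cls_def)
      qed
    qed
  qed
qed

lemma dd_tgt:
  assumes DA: "\<forall>i\<in>AA. D i = 0"
    and DS: "\<forall>i. D i \<in> supp (\<lambda>L. card L = 2 \<and> L \<inter> AA \<noteq> {})"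
    and a: "a \<in> bideg VV1 VV2 p q"
  shows "dd D a \<in> tgt p q"
  unfolding dd_def
proof (rule subspace_sum[OF subspace_tgt])
  fix I
  show "a $ I *\<^sub>R d_basis D I \<in> tgt p q"
  proof (cases "a $ I = 0")
    case True then show ?thesis using subspace_0[OF subspace_tgt] by simp
  next
    case False
    then have "cls p q I" using a bideg_supp by (auto simp: supp_def)
    then have c: "cls p q I" .
    have "d_basis D I \<in> supp (\<lambda>J. cls (p + 1) q J \<or> (q \<noteq> 0 \<and> cls (p + 2) (q - 1) J))"
      by (rule d_basis_supp[where D=D, OF DA DS c])
    then have "d_basis D I \<in> tgt p q" by (rule supp_to_tgt)
    then show ?thesis by (rule subspace_scale[OF subspace_tgt])
  qed
qed



section \<open>Splitting\<close>

lemma e_in_Lam1: "e i \<in> Lam 1"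
  unfolding Lam_def e_axis by (rule span_base) auto

lemma V1_Lam: "VV1 \<subseteq> Lam 1"
  unfolding Lam_def by (rule span_mono) (auto simp: e_axis)

lemma V2_Lam: "VV2 \<subseteq> Lam 1"
  unfolding Lam_def by (rule span_mono) (auto simp: e_axis)

lemma e_in_V2: "(i::idx) \<notin> AA \<Longrightarrow> e i \<in> VV2"
  by (cases i) (auto intro: span_base)

lemma splitting_V: "splitting VV1 VV2"
  unfolding splitting_def
proof (intro conjI)
  show "subspace VV1" "subspace VV2" by (rule subspace_span)+
  show "VV1 \<subseteq> Lam 1" "VV2 \<subseteq> Lam 1" by (rule V1_Lam, rule V2_Lam)
  show "VV1 \<inter> VV2 = {0}"
  proof
    show "{0} \<subseteq> VV1 \<inter> VV2" by (simp add: span_zero)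
    show "VV1 \<inter> VV2 \<subseteq> {0}"
    proof
      fix x assume x: "x \<in> VV1 \<inter> VV2"
      have "\<forall>I. x $ I = 0"
      proof (rule allI, rule ccontr)
        fix I assume "x $ I \<noteq> 0"
        have "x \<in> supp (\<lambda>I. \<exists>a\<in>AA. I = {a})" using x V1_supp by blast
        then have h1: "\<exists>a\<in>AA. I = {a}" using \<open>x $ I \<noteq> 0\<close> by (simp add: supp_def)
        have "x \<in> supp (\<lambda>I. \<exists>b. b \<notin> AA \<and> I = {b})" using x V2_supp by blast
        then have "\<exists>b. b \<notin> AA \<and> I = {b}" using \<open>x $ I \<noteq> 0\<close> by (simp add: supp_def)
        then have "\<exists>a\<in>AA. I = {a}" "\<exists>b. b \<notin> AA \<and> I = {b}" using h1 by blast+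
        then show False by auto
      qed
      then show "x \<in> {0}" by (simp add: vec_eq_iff)
    qed
  qed
  show "set_sum VV1 VV2 = Lam 1"
  proof
    show "set_sum VV1 VV2 \<subseteq> Lam 1"
    proof
      fix v assume "v \<in> set_sum VV1 VV2"
      then obtain x y where xy: "v = x + y" "x \<in> VV1" "y \<in> VV2" unfolding set_sum_def by blast
      then have "x \<in> Lam 1" "y \<in> Lam 1" using V1_Lam V2_Lam by blast+
      then show "v \<in> Lam 1" unfolding Lam_def xy(1) by (rule span_add)
    qed
    show "Lam 1 \<subseteq> set_sum VV1 VV2"
      unfolding Lam_def
    proof (rule span_minimal)
      show "subspace (set_sum VV1 VV2)" by (intro subspace_set_sum subspace_span)
      show "{axis I 1 |I. card I = 1} \<subseteq> set_sum VV1 VV2"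
      proof
        fix v :: form assume "v \<in> {axis I (1::real) |I. card I = 1}"
        then obtain I :: "idx set" where vI: "v = axis I 1" "card I = 1" by blast
        then obtain i where "I = {i}" using card_1_singleton_iff[of I] by auto
        then have v: "v = e i" using vI by (simp add: e_axis)
        show "v \<in> set_sum VV1 VV2"
        proof (cases "i \<in> AA")
          case True
          then have "e i \<in> {e X1, e X2}" by auto
          then have "e i \<in> VV1" by (rule span_base)
          then have "v = e i + 0 \<and> e i \<in> VV1 \<and> (0::form) \<in> VV2" using v by (simp add: span_zero)
          then show ?thesis unfolding set_sum_def by blast
        next
          case False
          then have "e i \<in> VV2" by (rule e_in_V2)
          then have "v = 0 + e i \<and> (0::form) \<in> VV1 \<and> e i \<in> VV2" using v by (simp add: span_zero)
          then show ?thesis unfolding set_sum_def by blast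
        qed
      qed
    qed
  qed
  show "dim VV1 = 2"
  proof -
    have "{e X1, e X2} \<subseteq> Basis" by (auto simp: Basis_vec_def e_axis)
    then have ind: "independent {e X1, e X2}" by (rule independent_mono[OF independent_Basis])
    have "e X1 \<noteq> e X2" by (simp add: e_axis axis_eq_axis)
    then show ?thesis using dim_eq_card_independent[OF ind] by simp
  qed
qed

section \<open>Filtration and cohomology\<close>

lemma vanish_to_filt:
  assumes a: "a \<in> Lam k" and v: "\<forall>I. I \<inter> AA = {} \<longrightarrow> a $ I = 0"
  shows "a \<in> filt VV1 VV2 k 1"
proof -
  have sf: "subspace (filt VV1 VV2 k 1)" unfolding filt_def by (rule subspace_span)
  have "(\<Sum>J\<in>UNIV. a $ J *\<^sub>R axis J (1::real)) \<in> filt VV1 VV2 k 1"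
  proof (rule subspace_sum[OF sf])
    fix J
    show "a $ J *\<^sub>R axis J 1 \<in> filt VV1 VV2 k 1"
    proof (cases "a $ J = 0")
      case True then show ?thesis using subspace_0[OF sf] by simp
    next
      case False
      then have cJ: "card J = k" using Lam_coord[OF a] by blast
      have ne: "J \<inter> AA \<noteq> {}" using False v by blast
      define p where "p = card (J \<inter> AA)"
      have p1: "1 \<le> p" using ne unfolding p_def by (simp add: card_gt_0_iff Suc_le_eq)
      have split: "card J = card (J \<inter> AA) + card (J - AA)"
        using card_Un_disjoint[of "J \<inter> AA" "J - AA"] by (metis Int_Diff_Un Int_Diff_disjoint finite)
      have pk: "p \<le> k" "card (J - AA) = k - p" using split cJ unfolding p_def by linarith+
      have "axis J 1 \<in> bideg VV1 VV2 p (k - p)" by (rule axis_in_bideg') (use pk in \<open>simp_all add: p_def\<close>)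
      moreover have "bideg VV1 VV2 p (k - p) \<subseteq> filt VV1 VV2 k 1"
        unfolding filt_def using p1 pk by (intro order_trans[OF _ span_superset]) auto
      ultimately show ?thesis using subspace_scale[OF sf] by blast
    qed
  qed
  then show ?thesis using expansion[of a] by simp
qed

lemma closed_sub_filt:
  assumes van: "\<forall>a. a \<in> Lam k \<and> dd D a = 0 \<longrightarrow> (\<forall>I. I \<inter> AA = {} \<and> card I = k \<longrightarrow> a $ I = 0)"
  shows "closed_forms D k \<subseteq> filt VV1 VV2 k 1"
proof
  fix a assume "a \<in> closed_forms D k"
  then have a: "a \<in> Lam k" "dd D a = 0" by (auto simp: closed_forms_def)
  have "\<forall>I. I \<inter> AA = {} \<longrightarrow> a $ I = 0"
    using van a Lam_coord[OF a(1)] by blast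
  then show "a \<in> filt VV1 VV2 k 1" by (rule vanish_to_filt[OF a(1)])
qed

lemma hpq_zero:
  assumes "closed_forms D k \<subseteq> filt VV1 VV2 k 1"
  shows "hpq D VV1 VV2 0 k = 0"
proof -
  have "Hfilt_lift D VV1 VV2 k 0 \<subseteq> Hfilt_lift D VV1 VV2 k 1"
    unfolding Hfilt_lift_def set_sum_def using assms by blast
  then have "dim (Hfilt_lift D VV1 VV2 k 0) \<le> dim (Hfilt_lift D VV1 VV2 k 1)" by (rule dim_subset)
  then show ?thesis by (simp add: hpq_def)
qed

lemma main_generic:
  assumes DA: "\<forall>i\<in>AA. D i = 0"
    and DS: "\<forall>i. D i \<in> supp (\<lambda>L. card L = 2 \<and> L \<inter> AA \<noteq> {})"
    and v3: "\<forall>a. a \<in> Lam 3 \<and> dd D a = 0 \<longrightarrow> (\<forall>I. I \<inter> AA = {} \<and> card I = 3 \<longrightarrow> a $ I = 0)"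
    and v4: "\<forall>a. a \<in> Lam 4 \<and> dd D a = 0 \<longrightarrow> (\<forall>I. I \<inter> AA = {} \<and> card I = 4 \<longrightarrow> a $ I = 0)"
  shows "\<exists>V2. coherent D (span {e X1, e X2}) V2
           \<and> hpq D (span {e X1, e X2}) V2 0 3 = 0
           \<and> hpq D (span {e X1, e X2}) V2 0 4 = 0"
proof (intro exI conjI)
  show "coherent D VV1 VV2"
    unfolding coherent_def
  proof (intro conjI allI)
    show "splitting VV1 VV2" by (rule splitting_V)
    fix p q
    show "dd D ` bideg VV1 VV2 p q \<subseteq> tgt p q"
    proof (rule image_subsetI)
      fix x assume "x \<in> bideg VV1 VV2 p q"
      then show "dd D x \<in> tgt p q" by (rule dd_tgt[OF DA DS])
    qed
  qed
  show "hpq D VV1 VV2 0 3 = 0" by (rule hpq_zero[OF closed_sub_filt[OF v3]])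
  show "hpq D VV1 VV2 0 4 = 0" by (rule hpq_zero[OF closed_sub_filt[OF v4]])
qed

definition T :: "form \<Rightarrow> idx \<Rightarrow> idx set \<Rightarrow> form \<Rightarrow> real" where
  "T a i K x = (\<Sum>J\<in>Pow K. if i \<in> J then 0 else
       a $ insert i J * ((-1) ^ cnt i J * (sgn_merge (K - J) J * x $ (K - J))))"

lemma T_zero [simp]: "T a i K 0 = 0"
  unfolding T_def by (rule sum.neutral) auto

lemma T_add [simp]: "T a i K (x + y) = T a i K x + T a i K y"
  unfolding T_def sum.distrib[symmetric] by (rule sum.cong) (auto simp: algebra_simps)

lemma T_axis [simp]: "T a i K (axis L c) =
   (if L \<subseteq> K \<and> i \<notin> K - L then a $ insert i (K - L) * ((-1) ^ cnt i (K - L) * (sgn_merge L (K - L) * c)) else 0)"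
proof -
  have "T a i K (axis L c) = (\<Sum>J\<in>Pow K. if J = K - L then (if L \<subseteq> K \<and> i \<notin> J then
       a $ insert i J * ((-1) ^ cnt i J * (sgn_merge (K - J) J * c)) else 0) else 0)"
    unfolding T_def
  proof (rule sum.cong[OF refl])
    fix J assume "J \<in> Pow K"
    then have "(K - J = L) = (J = K - L \<and> L \<subseteq> K)" by auto
    then show "(if i \<in> J then 0 else a $ insert i J * ((-1) ^ cnt i J * (sgn_merge (K - J) J * axis L c $ (K - J)))) =
      (if J = K - L then (if L \<subseteq> K \<and> i \<notin> J then
       a $ insert i J * ((-1) ^ cnt i J * (sgn_merge (K - J) J * c)) else 0) else 0)"
      by (auto simp: axis_nth')
  qed
  also have "\<dots> = (if L \<subseteq> K \<and> i \<notin> K - L then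
       a $ insert i (K - L) * ((-1) ^ cnt i (K - L) * (sgn_merge (K - (K - L)) (K - L) * c)) else 0)"
    by (simp add: sum.delta')
  also have "\<dots> = (if L \<subseteq> K \<and> i \<notin> K - L then
       a $ insert i (K - L) * ((-1) ^ cnt i (K - L) * (sgn_merge L (K - L) * c)) else 0)"
    by (auto simp: Diff_Diff_Int Int_absorb1)
  finally show ?thesis .
qed

lemma dd_nth3: "dd D a $ K = (\<Sum>i\<in>UNIV. T a i K (D i))"
  unfolding dd_nth2 T_def ..

lemma sub4: "I \<inter> AA = {} \<Longrightarrow> I \<subseteq> {X3, X4, X5, X6}"
proof
  fix x assume "I \<inter> AA = {}" "x \<in> I" then show "x \<in> {X3, X4, X5, X6}" by (cases x) auto
qed

lemma subsets3:
  assumes "I \<inter> AA = {}" "card I = 3"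
  shows "I = {X3, X4, X5} \<or> I = {X3, X4, X6} \<or> I = {X3, X5, X6} \<or> I = {X4, X5, X6}"
proof -
  let ?S = "{X3, X4, X5, X6}"
  have sub: "I \<subseteq> ?S" by (rule sub4[OF assms(1)])
  have "card (?S - I) = card ?S - card I" by (rule card_Diff_subset) (use sub in auto)
  then have "card (?S - I) = 1" using assms(2) by simp
  then obtain x where x: "?S - I = {x}" by (auto simp: card_1_singleton_iff)
  then have I: "I = ?S - {x}" using sub by auto
  have "x \<in> ?S" using x by auto
  then show ?thesis unfolding I by (auto simp: insert_Diff_if)
qed

lemma subsets4:
  assumes "I \<inter> AA = {}" "card I = 4"
  shows "I = {X3, X4, X5, X6}"
  by (rule card_subset_eq) (use sub4[OF assms(1)] assms(2) in auto)

lemma van_alg1_3: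
  assumes "dd alg1 a = 0"
  shows "a $ {X3, X4, X5} = 0 \<and> a $ {X3, X4, X6} = 0 \<and> a $ {X3, X5, X6} = 0 \<and> a $ {X4, X5, X6} = 0"
proof -
  have "dd alg1 a $ {X1, X2, X3, X6} = 0" "dd alg1 a $ {X1, X3, X4, X5} = 0" "dd alg1 a $ {X1, X2, X5, X6} = 0" "dd alg1 a $ {X1, X3, X5, X6} = 0" "dd alg1 a $ {X1, X2, X4, X5} = 0"
    using assms by simp_all
  then show ?thesis by (simp add: dd_nth3 UNIV_idx ee_eq insert_Diff_if sgn_merge_insert insert_commute)
qed

lemma van3_alg1: "\<forall>a. a \<in> Lam 3 \<and> dd alg1 a = 0 \<longrightarrow> (\<forall>I. I \<inter> AA = {} \<and> card I = 3 \<longrightarrow> a $ I = 0)"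
proof (intro allI impI)
  fix a I assume H: "a \<in> Lam 3 \<and> dd alg1 a = 0" "I \<inter> AA = {} \<and> card I = 3"
  then have "I = {X3, X4, X5} \<or> I = {X3, X4, X6} \<or> I = {X3, X5, X6} \<or> I = {X4, X5, X6}" using subsets3 by blast
  then show "a $ I = 0" using van_alg1_3[of a] H by auto
qed

lemma van_alg1_4:
  assumes "dd alg1 a = 0"
  shows "a $ {X3, X4, X5, X6} = 0"
proof -
  have "dd alg1 a $ {X1, X2, X4, X5, X6} = 0"
    using assms by simp_all
  then show ?thesis by (simp add: dd_nth3 UNIV_idx ee_eq insert_Diff_if sgn_merge_insert insert_commute)
qed

lemma van4_alg1: "\<forall>a. a \<in> Lam 4 \<and> dd alg1 a = 0 \<longrightarrow> (\<forall>I. I \<inter> AA = {} \<and> card I = 4 \<longrightarrow> a $ I = 0)"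
proof (intro allI impI)
  fix a I assume H: "a \<in> Lam 4 \<and> dd alg1 a = 0" "I \<inter> AA = {} \<and> card I = 4"
  then have "I = {X3, X4, X5, X6}" using subsets4 by blast
  then show "a $ I = 0" using van_alg1_4[of a] H by auto
qed

lemma DA_alg1: "\<forall>i\<in>AA. alg1 i = 0" by simp

lemma DS_alg1: "\<forall>i. alg1 i \<in> supp (\<lambda>L. card L = 2 \<and> L \<inter> AA \<noteq> {})"
proof
  fix i show "alg1 i \<in> supp (\<lambda>L. card L = 2 \<and> L \<inter> AA \<noteq> {})"
    by (cases i) (auto simp: ee_eq intro!: axis_supp add_supp zero_supp)
qed

lemma main_alg1: "\<exists>V2. coherent alg1 (span {e X1, e X2}) V2
           \<and> hpq alg1 (span {e X1, e X2}) V2 0 3 = 0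
           \<and> hpq alg1 (span {e X1, e X2}) V2 0 4 = 0"
  by (rule main_generic[OF DA_alg1 DS_alg1 van3_alg1 van4_alg1])

lemma van_alg2_3:
  assumes "dd alg2 a = 0"
  shows "a $ {X3, X4, X5} = 0 \<and> a $ {X3, X4, X6} = 0 \<and> a $ {X3, X5, X6} = 0 \<and> a $ {X4, X5, X6} = 0"
proof -
  have "dd alg2 a $ {X1, X2, X3, X6} = 0" "dd alg2 a $ {X1, X3, X4, X5} = 0" "dd alg2 a $ {X1, X2, X5, X6} = 0" "dd alg2 a $ {X1, X3, X5, X6} = 0" "dd alg2 a $ {X1, X2, X4, X5} = 0"
    using assms by simp_all
  then show ?thesis by (simp add: dd_nth3 UNIV_idx ee_eq insert_Diff_if sgn_merge_insert insert_commute)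
qed

lemma van3_alg2: "\<forall>a. a \<in> Lam 3 \<and> dd alg2 a = 0 \<longrightarrow> (\<forall>I. I \<inter> AA = {} \<and> card I = 3 \<longrightarrow> a $ I = 0)"
proof (intro allI impI)
  fix a I assume H: "a \<in> Lam 3 \<and> dd alg2 a = 0" "I \<inter> AA = {} \<and> card I = 3"
  then have "I = {X3, X4, X5} \<or> I = {X3, X4, X6} \<or> I = {X3, X5, X6} \<or> I = {X4, X5, X6}" using subsets3 by blast
  then show "a $ I = 0" using van_alg2_3[of a] H by auto
qed

lemma van_alg2_4:
  assumes "dd alg2 a = 0"
  shows "a $ {X3, X4, X5, X6} = 0"
proof -
  have "dd alg2 a $ {X1, X2, X4, X5, X6} = 0"
    using assms by simp_all
  then show ?thesis by (simp add: dd_nth3 UNIV_idx ee_eq insert_Diff_if sgn_merge_insert insert_commute)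
qed

lemma van4_alg2: "\<forall>a. a \<in> Lam 4 \<and> dd alg2 a = 0 \<longrightarrow> (\<forall>I. I \<inter> AA = {} \<and> card I = 4 \<longrightarrow> a $ I = 0)"
proof (intro allI impI)
  fix a I assume H: "a \<in> Lam 4 \<and> dd alg2 a = 0" "I \<inter> AA = {} \<and> card I = 4"
  then have "I = {X3, X4, X5, X6}" using subsets4 by blast
  then show "a $ I = 0" using van_alg2_4[of a] H by auto
qed

lemma DA_alg2: "\<forall>i\<in>AA. alg2 i = 0" by simp

lemma DS_alg2: "\<forall>i. alg2 i \<in> supp (\<lambda>L. card L = 2 \<and> L \<inter> AA \<noteq> {})"
proof
  fix i show "alg2 i \<in> supp (\<lambda>L. card L = 2 \<and> L \<inter> AA \<noteq> {})"
    by (cases i) (auto simp: ee_eq intro!: axis_supp add_supp zero_supp)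
qed

lemma main_alg2: "\<exists>V2. coherent alg2 (span {e X1, e X2}) V2
           \<and> hpq alg2 (span {e X1, e X2}) V2 0 3 = 0
           \<and> hpq alg2 (span {e X1, e X2}) V2 0 4 = 0"
  by (rule main_generic[OF DA_alg2 DS_alg2 van3_alg2 van4_alg2])

lemma van_alg3_3:
  assumes "dd alg3 a = 0"
  shows "a $ {X3, X4, X5} = 0 \<and> a $ {X3, X4, X6} = 0 \<and> a $ {X3, X5, X6} = 0 \<and> a $ {X4, X5, X6} = 0"
proof -
  have "dd alg3 a $ {X1, X2, X3, X5} = 0" "dd alg3 a $ {X1, X2, X3, X6} = 0" "dd alg3 a $ {X1, X3, X4, X6} = 0" "dd alg3 a $ {X1, X2, X5, X6} = 0"
    using assms by simp_all
  then show ?thesis by (simp add: dd_nth3 UNIV_idx ee_eq insert_Diff_if sgn_merge_insert insert_commute)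
qed

lemma van3_alg3: "\<forall>a. a \<in> Lam 3 \<and> dd alg3 a = 0 \<longrightarrow> (\<forall>I. I \<inter> AA = {} \<and> card I = 3 \<longrightarrow> a $ I = 0)"
proof (intro allI impI)
  fix a I assume H: "a \<in> Lam 3 \<and> dd alg3 a = 0" "I \<inter> AA = {} \<and> card I = 3"
  then have "I = {X3, X4, X5} \<or> I = {X3, X4, X6} \<or> I = {X3, X5, X6} \<or> I = {X4, X5, X6}" using subsets3 by blast
  then show "a $ I = 0" using van_alg3_3[of a] H by auto
qed

lemma van_alg3_4:
  assumes "dd alg3 a = 0"
  shows "a $ {X3, X4, X5, X6} = 0"
proof -
  have "dd alg3 a $ {X1, X2, X3, X5, X6} = 0"
    using assms by simp_all
  then show ?thesis by (simp add: dd_nth3 UNIV_idx ee_eq insert_Diff_if sgn_merge_insert insert_commute)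
qed

lemma van4_alg3: "\<forall>a. a \<in> Lam 4 \<and> dd alg3 a = 0 \<longrightarrow> (\<forall>I. I \<inter> AA = {} \<and> card I = 4 \<longrightarrow> a $ I = 0)"
proof (intro allI impI)
  fix a I assume H: "a \<in> Lam 4 \<and> dd alg3 a = 0" "I \<inter> AA = {} \<and> card I = 4"
  then have "I = {X3, X4, X5, X6}" using subsets4 by blast
  then show "a $ I = 0" using van_alg3_4[of a] H by auto
qed

lemma DA_alg3: "\<forall>i\<in>AA. alg3 i = 0" by simp

lemma DS_alg3: "\<forall>i. alg3 i \<in> supp (\<lambda>L. card L = 2 \<and> L \<inter> AA \<noteq> {})"
proof
  fix i show "alg3 i \<in> supp (\<lambda>L. card L = 2 \<and> L \<inter> AA \<noteq> {})"
    by (cases i) (auto simp: ee_eq intro!: axis_supp add_supp zero_supp)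
qed

lemma main_alg3: "\<exists>V2. coherent alg3 (span {e X1, e X2}) V2
           \<and> hpq alg3 (span {e X1, e X2}) V2 0 3 = 0
           \<and> hpq alg3 (span {e X1, e X2}) V2 0 4 = 0"
  by (rule main_generic[OF DA_alg3 DS_alg3 van3_alg3 van4_alg3])

lemma van_alg4_3:
  assumes "dd alg4 a = 0"
  shows "a $ {X3, X4, X5} = 0 \<and> a $ {X3, X4, X6} = 0 \<and> a $ {X3, X5, X6} = 0 \<and> a $ {X4, X5, X6} = 0"
proof -
  have "dd alg4 a $ {X1, X2, X4, X6} = 0" "dd alg4 a $ {X1, X2, X4, X5} = 0" "dd alg4 a $ {X2, X3, X4, X6} = 0" "dd alg4 a $ {X1, X2, X5, X6} = 0" "dd alg4 a $ {X1, X2, X3, X5} = 0" "dd alg4 a $ {X1, X2, X3, X6} = 0"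
    using assms by simp_all
  then show ?thesis by (simp add: dd_nth3 UNIV_idx ee_eq insert_Diff_if sgn_merge_insert insert_commute)
qed

lemma van3_alg4: "\<forall>a. a \<in> Lam 3 \<and> dd alg4 a = 0 \<longrightarrow> (\<forall>I. I \<inter> AA = {} \<and> card I = 3 \<longrightarrow> a $ I = 0)"
proof (intro allI impI)
  fix a I assume H: "a \<in> Lam 3 \<and> dd alg4 a = 0" "I \<inter> AA = {} \<and> card I = 3"
  then have "I = {X3, X4, X5} \<or> I = {X3, X4, X6} \<or> I = {X3, X5, X6} \<or> I = {X4, X5, X6}" using subsets3 by blast
  then show "a $ I = 0" using van_alg4_3[of a] H by auto
qed

lemma van_alg4_4:
  assumes "dd alg4 a = 0"
  shows "a $ {X3, X4, X5, X6} = 0"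
proof -
  have "dd alg4 a $ {X1, X2, X3, X5, X6} = 0"
    using assms by simp_all
  then show ?thesis by (simp add: dd_nth3 UNIV_idx ee_eq insert_Diff_if sgn_merge_insert insert_commute)
qed

lemma van4_alg4: "\<forall>a. a \<in> Lam 4 \<and> dd alg4 a = 0 \<longrightarrow> (\<forall>I. I \<inter> AA = {} \<and> card I = 4 \<longrightarrow> a $ I = 0)"
proof (intro allI impI)
  fix a I assume H: "a \<in> Lam 4 \<and> dd alg4 a = 0" "I \<inter> AA = {} \<and> card I = 4"
  then have "I = {X3, X4, X5, X6}" using subsets4 by blast
  then show "a $ I = 0" using van_alg4_4[of a] H by auto
qed

lemma DA_alg4: "\<forall>i\<in>AA. alg4 i = 0" by simp

lemma DS_alg4: "\<forall>i. alg4 i \<in> supp (\<lambda>L. card L = 2 \<and> L \<inter> AA \<noteq> {})"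
proof
  fix i show "alg4 i \<in> supp (\<lambda>L. card L = 2 \<and> L \<inter> AA \<noteq> {})"
    by (cases i) (auto simp: ee_eq intro!: axis_supp add_supp zero_supp)
qed

lemma main_alg4: "\<exists>V2. coherent alg4 (span {e X1, e X2}) V2
           \<and> hpq alg4 (span {e X1, e X2}) V2 0 3 = 0
           \<and> hpq alg4 (span {e X1, e X2}) V2 0 4 = 0"
  by (rule main_generic[OF DA_alg4 DS_alg4 van3_alg4 van4_alg4])

lemma van_alg5_3:
  assumes "dd alg5 a = 0"
  shows "a $ {X3, X4, X5} = 0 \<and> a $ {X3, X4, X6} = 0 \<and> a $ {X3, X5, X6} = 0 \<and> a $ {X4, X5, X6} = 0"
proof -
  have "dd alg5 a $ {X1, X2, X4, X6} = 0" "dd alg5 a $ {X1, X2, X3, X6} = 0" "dd alg5 a $ {X1, X3, X4, X6} = 0" "dd alg5 a $ {X1, X2, X5, X6} = 0" "dd alg5 a $ {X1, X2, X3, X5} = 0"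
    using assms by simp_all
  then show ?thesis by (simp add: dd_nth3 UNIV_idx ee_eq insert_Diff_if sgn_merge_insert insert_commute)
qed

lemma van3_alg5: "\<forall>a. a \<in> Lam 3 \<and> dd alg5 a = 0 \<longrightarrow> (\<forall>I. I \<inter> AA = {} \<and> card I = 3 \<longrightarrow> a $ I = 0)"
proof (intro allI impI)
  fix a I assume H: "a \<in> Lam 3 \<and> dd alg5 a = 0" "I \<inter> AA = {} \<and> card I = 3"
  then have "I = {X3, X4, X5} \<or> I = {X3, X4, X6} \<or> I = {X3, X5, X6} \<or> I = {X4, X5, X6}" using subsets3 by blast
  then show "a $ I = 0" using van_alg5_3[of a] H by auto
qed

lemma van_alg5_4:
  assumes "dd alg5 a = 0"
  shows "a $ {X3, X4, X5, X6} = 0"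
proof -
  have "dd alg5 a $ {X1, X2, X3, X5, X6} = 0"
    using assms by simp_all
  then show ?thesis by (simp add: dd_nth3 UNIV_idx ee_eq insert_Diff_if sgn_merge_insert insert_commute)
qed

lemma van4_alg5: "\<forall>a. a \<in> Lam 4 \<and> dd alg5 a = 0 \<longrightarrow> (\<forall>I. I \<inter> AA = {} \<and> card I = 4 \<longrightarrow> a $ I = 0)"
proof (intro allI impI)
  fix a I assume H: "a \<in> Lam 4 \<and> dd alg5 a = 0" "I \<inter> AA = {} \<and> card I = 4"
  then have "I = {X3, X4, X5, X6}" using subsets4 by blast
  then show "a $ I = 0" using van_alg5_4[of a] H by auto
qed

lemma DA_alg5: "\<forall>i\<in>AA. alg5 i = 0" by simp

lemma DS_alg5: "\<forall>i. alg5 i \<in> supp (\<lambda>L. card L = 2 \<and> L \<inter> AA \<noteq> {})"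
proof
  fix i show "alg5 i \<in> supp (\<lambda>L. card L = 2 \<and> L \<inter> AA \<noteq> {})"
    by (cases i) (auto simp: ee_eq intro!: axis_supp add_supp zero_supp)
qed

lemma main_alg5: "\<exists>V2. coherent alg5 (span {e X1, e X2}) V2
           \<and> hpq alg5 (span {e X1, e X2}) V2 0 3 = 0
           \<and> hpq alg5 (span {e X1, e X2}) V2 0 4 = 0"
  by (rule main_generic[OF DA_alg5 DS_alg5 van3_alg5 van4_alg5])

lemma van_alg6_3:
  assumes "dd alg6 a = 0"
  shows "a $ {X3, X4, X5} = 0 \<and> a $ {X3, X4, X6} = 0 \<and> a $ {X3, X5, X6} = 0 \<and> a $ {X4, X5, X6} = 0"
proof -
  have "dd alg6 a $ {X1, X2, X4, X6} = 0" "dd alg6 a $ {X1, X2, X3, X5} = 0" "dd alg6 a $ {X2, X3, X4, X5} = 0" "dd alg6 a $ {X1, X2, X5, X6} = 0" "dd alg6 a $ {X1, X2, X3, X6} = 0"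
    using assms by simp_all
  then show ?thesis by (simp add: dd_nth3 UNIV_idx ee_eq insert_Diff_if sgn_merge_insert insert_commute)
qed

lemma van3_alg6: "\<forall>a. a \<in> Lam 3 \<and> dd alg6 a = 0 \<longrightarrow> (\<forall>I. I \<inter> AA = {} \<and> card I = 3 \<longrightarrow> a $ I = 0)"
proof (intro allI impI)
  fix a I assume H: "a \<in> Lam 3 \<and> dd alg6 a = 0" "I \<inter> AA = {} \<and> card I = 3"
  then have "I = {X3, X4, X5} \<or> I = {X3, X4, X6} \<or> I = {X3, X5, X6} \<or> I = {X4, X5, X6}" using subsets3 by blast
  then show "a $ I = 0" using van_alg6_3[of a] H by auto
qed

lemma van_alg6_4:
  assumes "dd alg6 a = 0"
  shows "a $ {X3, X4, X5, X6} = 0"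
proof -
  have "dd alg6 a $ {X1, X2, X3, X5, X6} = 0"
    using assms by simp_all
  then show ?thesis by (simp add: dd_nth3 UNIV_idx ee_eq insert_Diff_if sgn_merge_insert insert_commute)
qed

lemma van4_alg6: "\<forall>a. a \<in> Lam 4 \<and> dd alg6 a = 0 \<longrightarrow> (\<forall>I. I \<inter> AA = {} \<and> card I = 4 \<longrightarrow> a $ I = 0)"
proof (intro allI impI)
  fix a I assume H: "a \<in> Lam 4 \<and> dd alg6 a = 0" "I \<inter> AA = {} \<and> card I = 4"
  then have "I = {X3, X4, X5, X6}" using subsets4 by blast
  then show "a $ I = 0" using van_alg6_4[of a] H by auto
qed

lemma DA_alg6: "\<forall>i\<in>AA. alg6 i = 0" by simp

lemma DS_alg6: "\<forall>i. alg6 i \<in> supp (\<lambda>L. card L = 2 \<and> L \<inter> AA \<noteq> {})"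
proof
  fix i show "alg6 i \<in> supp (\<lambda>L. card L = 2 \<and> L \<inter> AA \<noteq> {})"
    by (cases i) (auto simp: ee_eq intro!: axis_supp add_supp zero_supp)
qed

lemma main_alg6: "\<exists>V2. coherent alg6 (span {e X1, e X2}) V2
           \<and> hpq alg6 (span {e X1, e X2}) V2 0 3 = 0
           \<and> hpq alg6 (span {e X1, e X2}) V2 0 4 = 0"
  by (rule main_generic[OF DA_alg6 DS_alg6 van3_alg6 van4_alg6])

lemma van_alg7_3:
  assumes "dd alg7 a = 0"
  shows "a $ {X3, X4, X5} = 0 \<and> a $ {X3, X4, X6} = 0 \<and> a $ {X3, X5, X6} = 0 \<and> a $ {X4, X5, X6} = 0"
proof -
  have "dd alg7 a $ {X1, X2, X4, X5} = 0" "dd alg7 a $ {X1, X2, X3, X5} = 0" "dd alg7 a $ {X1, X3, X4, X5} = 0" "dd alg7 a $ {X1, X2, X5, X6} = 0" "dd alg7 a $ {X1, X2, X3, X6} = 0"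
    using assms by simp_all
  then show ?thesis by (simp add: dd_nth3 UNIV_idx ee_eq insert_Diff_if sgn_merge_insert insert_commute)
qed

lemma van3_alg7: "\<forall>a. a \<in> Lam 3 \<and> dd alg7 a = 0 \<longrightarrow> (\<forall>I. I \<inter> AA = {} \<and> card I = 3 \<longrightarrow> a $ I = 0)"
proof (intro allI impI)
  fix a I assume H: "a \<in> Lam 3 \<and> dd alg7 a = 0" "I \<inter> AA = {} \<and> card I = 3"
  then have "I = {X3, X4, X5} \<or> I = {X3, X4, X6} \<or> I = {X3, X5, X6} \<or> I = {X4, X5, X6}" using subsets3 by blast
  then show "a $ I = 0" using van_alg7_3[of a] H by auto
qed

lemma van_alg7_4:
  assumes "dd alg7 a = 0"
  shows "a $ {X3, X4, X5, X6} = 0"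
proof -
  have "dd alg7 a $ {X1, X2, X3, X5, X6} = 0"
    using assms by simp_all
  then show ?thesis by (simp add: dd_nth3 UNIV_idx ee_eq insert_Diff_if sgn_merge_insert insert_commute)
qed

lemma van4_alg7: "\<forall>a. a \<in> Lam 4 \<and> dd alg7 a = 0 \<longrightarrow> (\<forall>I. I \<inter> AA = {} \<and> card I = 4 \<longrightarrow> a $ I = 0)"
proof (intro allI impI)
  fix a I assume H: "a \<in> Lam 4 \<and> dd alg7 a = 0" "I \<inter> AA = {} \<and> card I = 4"
  then have "I = {X3, X4, X5, X6}" using subsets4 by blast
  then show "a $ I = 0" using van_alg7_4[of a] H by auto
qed

lemma DA_alg7: "\<forall>i\<in>AA. alg7 i = 0" by simp

lemma DS_alg7: "\<forall>i. alg7 i \<in> supp (\<lambda>L. card L = 2 \<and> L \<inter> AA \<noteq> {})"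
proof
  fix i show "alg7 i \<in> supp (\<lambda>L. card L = 2 \<and> L \<inter> AA \<noteq> {})"
    by (cases i) (auto simp: ee_eq intro!: axis_supp add_supp zero_supp)
qed

lemma main_alg7: "\<exists>V2. coherent alg7 (span {e X1, e X2}) V2
           \<and> hpq alg7 (span {e X1, e X2}) V2 0 3 = 0
           \<and> hpq alg7 (span {e X1, e X2}) V2 0 4 = 0"
  by (rule main_generic[OF DA_alg7 DS_alg7 van3_alg7 van4_alg7])

lemma van_alg8_3:
  assumes "dd alg8 a = 0"
  shows "a $ {X3, X4, X5} = 0 \<and> a $ {X3, X4, X6} = 0 \<and> a $ {X3, X5, X6} = 0 \<and> a $ {X4, X5, X6} = 0"
proof -
  have "dd alg8 a $ {X1, X2, X3, X4} = 0" "dd alg8 a $ {X1, X3, X4, X5} = 0" "dd alg8 a $ {X1, X2, X3, X6} = 0" "dd alg8 a $ {X1, X2, X4, X6} = 0"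
    using assms by simp_all
  then show ?thesis by (simp add: dd_nth3 UNIV_idx ee_eq insert_Diff_if sgn_merge_insert insert_commute)
qed

lemma van3_alg8: "\<forall>a. a \<in> Lam 3 \<and> dd alg8 a = 0 \<longrightarrow> (\<forall>I. I \<inter> AA = {} \<and> card I = 3 \<longrightarrow> a $ I = 0)"
proof (intro allI impI)
  fix a I assume H: "a \<in> Lam 3 \<and> dd alg8 a = 0" "I \<inter> AA = {} \<and> card I = 3"
  then have "I = {X3, X4, X5} \<or> I = {X3, X4, X6} \<or> I = {X3, X5, X6} \<or> I = {X4, X5, X6}" using subsets3 by blast
  then show "a $ I = 0" using van_alg8_3[of a] H by auto
qed

lemma van_alg8_4:
  assumes "dd alg8 a = 0"
  shows "a $ {X3, X4, X5, X6} = 0"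
proof -
  have "dd alg8 a $ {X1, X2, X3, X4, X6} = 0"
    using assms by simp_all
  then show ?thesis by (simp add: dd_nth3 UNIV_idx ee_eq insert_Diff_if sgn_merge_insert insert_commute)
qed

lemma van4_alg8: "\<forall>a. a \<in> Lam 4 \<and> dd alg8 a = 0 \<longrightarrow> (\<forall>I. I \<inter> AA = {} \<and> card I = 4 \<longrightarrow> a $ I = 0)"
proof (intro allI impI)
  fix a I assume H: "a \<in> Lam 4 \<and> dd alg8 a = 0" "I \<inter> AA = {} \<and> card I = 4"
  then have "I = {X3, X4, X5, X6}" using subsets4 by blast
  then show "a $ I = 0" using van_alg8_4[of a] H by auto
qed

lemma DA_alg8: "\<forall>i\<in>AA. alg8 i = 0" by simp

lemma DS_alg8: "\<forall>i. alg8 i \<in> supp (\<lambda>L. card L = 2 \<and> L \<inter> AA \<noteq> {})"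
proof
  fix i show "alg8 i \<in> supp (\<lambda>L. card L = 2 \<and> L \<inter> AA \<noteq> {})"
    by (cases i) (auto simp: ee_eq intro!: axis_supp add_supp zero_supp)
qed

lemma main_alg8: "\<exists>V2. coherent alg8 (span {e X1, e X2}) V2
           \<and> hpq alg8 (span {e X1, e X2}) V2 0 3 = 0
           \<and> hpq alg8 (span {e X1, e X2}) V2 0 4 = 0"
  by (rule main_generic[OF DA_alg8 DS_alg8 van3_alg8 van4_alg8])

theorem lemma7:
  assumes "D \<in> {alg1, alg2, alg3, alg4, alg5, alg6, alg7, alg8}"
  shows "\<exists>V2. coherent D (span {e X1, e X2}) V2
           \<and> hpq D (span {e X1, e X2}) V2 0 3 = 0
           \<and> hpq D (span {e X1, e X2}) V2 0 4 = 0"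
proof -
  have "D = alg1 \<or> D = alg2 \<or> D = alg3 \<or> D = alg4 \<or> D = alg5 \<or> D = alg6 \<or> D = alg7 \<or> D = alg8"
    using assms by simp
  then show ?thesis
    by (elim disjE) (simp_all only: main_alg1 main_alg2 main_alg3 main_alg4 main_alg5 main_alg6 main_alg7 main_alg8)
qed

end
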